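(* Let $\mathcal{M}_{\mathcal{T}}$ be a staged tree model. Let $H$ be the $(|I|+|F|)\times|J|$ matrix with rows indexed by $I\sqcup F$ and entries $h_{ij}=\mu_{ij}$ for $i\in I$ and $h_{fj}=-\sum_{s_\ell\in f}\mu_{\ell j}$ for $f\in F$. Define $\lambda\in\{-1,+1\}^{|J|}$ by $\lambda_j=(-1)^{\sum_f h_{fj}}$. Then the pair $(\tilde H,\tilde\lambda)$ obtained from $(H,\lambda)$ by summing collinear rows and deleting zero rows is the Horn pair of $\mathcal{M}_{\mathcal{T}}$, i.e. it is a Horn pair whose Horn map equals the MLE of $\mathcal{M}_{\mathcal{T}}$ and has image $\mathcal{M}_{\mathcal{T}}$.
   Context: Staged tree: a directed rooted tree $\mathcal{T}$, every non-leaf vertex with at least two outgoing edges, with edge labels from $\{s_i:i\in I\}$ such that any two florets (multisets of labels on the outgoing edges of a vertex) are equal or disjoint; $F$ is the set of florets, $J$ the set of root-to-leaf paths ($|J|=n+1$), $\mu_{ij}$ the number of occurrences of $s_i$ on path $j$. The model $\mathcal{M}_{\mathcal{T}}\subseteq\Delta_n$ is the image of $\{(s_i)\in(0,1)^{|I|}:\sum_{s_i\in f}s_i=1\ \forall f\}$ under $p_j=\prod_i s_i^{\mu_{ij}}$. For an integer matrix $H=(h_{ij})$ with columns $h_j$ summing to zero and a vector $\lambda$, write $(Hu)^{h_j}=\prod_i(\sum_k h_{ik}u_k)^{h_{ij}}$ and consider the rational map $u\mapsto(\lambda_j(Hu)^{h_j})_j$. $(H,\lambda)$ is friendly if all $\lambda_j\ne0$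 and $\sum_j\lambda_j(Hu)^{h_j}=1$ identically. A friendly pair is a Horn pair if no row of $H$ is zero or a multiple of another row and the map is defined on and sends positive vectors to positive vectors; its restriction to $\mathbb{R}^{|J|}_{>0}$ is the Horn map. The reduction $(\tilde H,\tilde\lambda)$: replace each class of collinear rows of $H$ by their sum, delete zero rows, and take $\tilde\lambda$ the coefficient vector so that $(\tilde H,\tilde\lambda)$ defines the same rational map as $(H,\lambda)$. *)

theory Defs
  imports "HOL-Analysis.Analysis"
begin

text \<open>A matrix H has rows indexed by a finite set R and columns by a finite set J,
  entries h r j (integers). Vectors u are functions on the column index type; only
  their values on J matter.\<close>

definition hlin :: "('r \<Rightarrow> 'c \<Rightarrow> int) \<Rightarrow> 'c set \<Rightarrow> ('c \<Rightarrow> real) \<Rightarrow> 'r \<Rightarrow> real" where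
  "hlin h J u i = (\<Sum>k\<in>J. real_of_int (h i k) * u k)"

definition hmono :: "('r \<Rightarrow> 'c \<Rightarrow> int) \<Rightarrow> 'r set \<Rightarrow> 'c set \<Rightarrow> ('c \<Rightarrow> real) \<Rightarrow> 'c \<Rightarrow> real" where
  "hmono h R J u j = (\<Prod>i\<in>R. (hlin h J u i) powi (h i j))"

definition hdefined :: "('r \<Rightarrow> 'c \<Rightarrow> int) \<Rightarrow> 'r set \<Rightarrow> 'c set \<Rightarrow> ('c \<Rightarrow> real) \<Rightarrow> bool" where
  "hdefined h R J u \<longleftrightarrow> (\<forall>j\<in>J. \<forall>i\<in>R. h i j < 0 \<longrightarrow> hlin h J u i \<noteq> 0)"

definition hmap :: "('r \<Rightarrow> 'c \<Rightarrow> int) \<Rightarrow> 'r set \<Rightarrow> 'c set \<Rightarrow> ('c \<Rightarrow> real) \<Rightarrow> ('c \<Rightarrow> real) \<Rightarrow> 'c \<Rightarrow> real" where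
  "hmap h R J lam u = (\<lambda>j. if j \<in> J then lam j * hmono h R J u j else 0)"

definition friendly :: "('r \<Rightarrow> 'c \<Rightarrow> int) \<Rightarrow> 'r set \<Rightarrow> 'c set \<Rightarrow> ('c \<Rightarrow> real) \<Rightarrow> bool" where
  "friendly h R J lam \<longleftrightarrow> finite R \<and> finite J \<and>
     (\<forall>j\<in>J. (\<Sum>i\<in>R. h i j) = 0) \<and>
     (\<forall>j\<in>J. lam j \<noteq> 0) \<and>
     (\<forall>u. hdefined h R J u \<longrightarrow> (\<Sum>j\<in>J. lam j * hmono h R J u j) = 1)"

definition zero_row :: "('r \<Rightarrow> 'c \<Rightarrow> int) \<Rightarrow> 'c set \<Rightarrow> 'r \<Rightarrow> bool" where
  "zero_row h J i \<longleftrightarrow> (\<forall>k\<in>J. h i k = 0)"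

definition row_multiple :: "('r \<Rightarrow> 'c \<Rightarrow> int) \<Rightarrow> 'c set \<Rightarrow> 'r \<Rightarrow> 'r \<Rightarrow> bool" where
  "row_multiple h J i i' \<longleftrightarrow> (\<exists>c::real. \<forall>k\<in>J. real_of_int (h i k) = c * real_of_int (h i' k))"

definition horn_pair :: "('r \<Rightarrow> 'c \<Rightarrow> int) \<Rightarrow> 'r set \<Rightarrow> 'c set \<Rightarrow> ('c \<Rightarrow> real) \<Rightarrow> bool" where
  "horn_pair h R J lam \<longleftrightarrow> friendly h R J lam \<and>
     (\<forall>i\<in>R. \<not> zero_row h J i) \<and>
     (\<forall>i\<in>R. \<forall>i'\<in>R. i \<noteq> i' \<longrightarrow> \<not> row_multiple h J i i') \<and>
     (\<forall>u. (\<forall>j\<in>J. 0 < u j) \<longrightarrow> hdefined h R J u \<and> (\<forall>j\<in>J. 0 < hmap h R J lam u j))"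

definition nz_rows :: "('r \<Rightarrow> 'c \<Rightarrow> int) \<Rightarrow> 'r set \<Rightarrow> 'c set \<Rightarrow> 'r set" where
  "nz_rows h R J = {i\<in>R. \<not> zero_row h J i}"

definition collinear_rel :: "('r \<Rightarrow> 'c \<Rightarrow> int) \<Rightarrow> 'r set \<Rightarrow> 'c set \<Rightarrow> ('r \<times> 'r) set" where
  "collinear_rel h R J = {(i, i'). i \<in> nz_rows h R J \<and> i' \<in> nz_rows h R J \<and> row_multiple h J i' i}"

definition red_h :: "('r \<Rightarrow> 'c \<Rightarrow> int) \<Rightarrow> 'r set \<Rightarrow> 'c \<Rightarrow> int" where
  "red_h h C k = (\<Sum>i\<in>C. h i k)"

definition red_rows :: "('r \<Rightarrow> 'c \<Rightarrow> int) \<Rightarrow> 'r set \<Rightarrow> 'c set \<Rightarrow> 'r set set" where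
  "red_rows h R J = {C \<in> nz_rows h R J // collinear_rel h R J. \<not> zero_row (red_h h) J C}"

definition red_lam :: "('r \<Rightarrow> 'c \<Rightarrow> int) \<Rightarrow> 'r set \<Rightarrow> 'c set \<Rightarrow> ('c \<Rightarrow> real) \<Rightarrow> 'c \<Rightarrow> real" where
  "red_lam h R J lam = (THE lam'. (\<forall>j. j \<notin> J \<longrightarrow> lam' j = 0) \<and>
      (\<forall>u. hdefined h R J u \<and> hdefined (red_h h) (red_rows h R J) J u \<longrightarrow>
          hmap (red_h h) (red_rows h R J) J lam' u = hmap h R J lam u))"

datatype 'l ltree = Node "('l \<times> 'l ltree) list"

inductive vertex :: "'l ltree \<Rightarrow> 'l ltree \<Rightarrow> bool" where
  root: "vertex t t"
| child: "(l, t') \<in> set cs \<Longrightarrow> vertex t' v \<Longrightarrow> vertex (Node cs) v"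

inductive is_path :: "'l ltree \<Rightarrow> 'l list \<Rightarrow> bool" where
  leaf: "is_path (Node []) []"
| step: "(l, t) \<in> set cs \<Longrightarrow> is_path t p \<Longrightarrow> is_path (Node cs) (l # p)"

definition paths :: "'l ltree \<Rightarrow> 'l list set" where
  "paths T = {p. is_path T p}"

definition florets :: "'l ltree \<Rightarrow> 'l set set" where
  "florets T = {set (map fst cs) | cs. vertex T (Node cs) \<and> cs \<noteq> []}"

definition labels :: "'l ltree \<Rightarrow> 'l set" where
  "labels T = \<Union> (florets T)"

definition staged_tree :: "'l ltree \<Rightarrow> bool" where
  "staged_tree T \<longleftrightarrow>
     (\<forall>cs. vertex T (Node cs) \<longrightarrow> cs = [] \<or> 2 \<le> length cs) \<and>
     (\<forall>cs. vertex T (Node cs) \<longrightarrow> distinct (map fst cs)) \<and>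
     (\<forall>f\<in>florets T. \<forall>g\<in>florets T. f = g \<or> f \<inter> g = {})"

definition mu :: "'l \<Rightarrow> 'l list \<Rightarrow> nat" where
  "mu i j = count_list j i"

definition staged_model :: "'l ltree \<Rightarrow> ('l list \<Rightarrow> real) set" where
  "staged_model T = {p. \<exists>s :: 'l \<Rightarrow> real.
      (\<forall>i\<in>labels T. 0 < s i \<and> s i < 1) \<and>
      (\<forall>f\<in>florets T. (\<Sum>i\<in>f. s i) = 1) \<and>
      p = (\<lambda>j. if j \<in> paths T then (\<Prod>i\<in>labels T. s i ^ mu i j) else 0)}"

definition loglik :: "'c set \<Rightarrow> ('c \<Rightarrow> real) \<Rightarrow> ('c \<Rightarrow> real) \<Rightarrow> real" where
  "loglik J u p = (\<Sum>j\<in>J. u j * ln (p j))"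

definition is_MLE :: "'c set \<Rightarrow> ('c \<Rightarrow> real) set \<Rightarrow> ('c \<Rightarrow> real) \<Rightarrow> ('c \<Rightarrow> real) \<Rightarrow> bool" where
  "is_MLE J M u p \<longleftrightarrow> p \<in> M \<and> (\<forall>q\<in>M. q \<noteq> p \<longrightarrow> loglik J u q < loglik J u p)"

definition stH :: "'l ltree \<Rightarrow> ('l + 'l set) \<Rightarrow> 'l list \<Rightarrow> int" where
  "stH T r j = (case r of Inl i \<Rightarrow> int (mu i j)
                        | Inr f \<Rightarrow> - (\<Sum>l\<in>f. int (mu l j)))"

definition stR :: "'l ltree \<Rightarrow> ('l + 'l set) set" where
  "stR T = Inl ` labels T \<union> Inr ` florets T"

definition stLam :: "'l ltree \<Rightarrow> 'l list \<Rightarrow> real" where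
  "stLam T j = (-1::real) powi (\<Sum>f\<in>florets T. stH T (Inr f) j)"

end

theory Submission
  imports Defs
begin

lemma hlin_mult:
  assumes "\<forall>k\<in>J. real_of_int (h i k) = c * real_of_int (h r k)"
  shows "hlin h J u i = c * hlin h J u r"
  using assms by (simp add: hlin_def sum_distrib_left mult.assoc)

lemma hlin_red: "hlin (red_h h) J u C = (\<Sum>i\<in>C. hlin h J u i)"
  unfolding hlin_def red_h_def by (simp add: sum_distrib_right sum.swap[of _ J])

lemma powi_add_gen:
  fixes x :: real
  assumes "x \<noteq> 0 \<or> (0 \<le> m \<and> 0 \<le> n)"
  shows "x powi (m + n) = x powi m * x powi n"
proof (cases "x \<noteq> 0 \<or> m + n \<noteq> 0")
  case True then show ?thesis by (rule power_int_add)
next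
  case False then have "m = 0" "n = 0" using assms by auto
  then show ?thesis by simp
qed

lemma prod_powi_factor:
  fixes a :: "'i \<Rightarrow> real"
  assumes "finite C" "x \<noteq> 0 \<or> (\<forall>i\<in>C. 0 \<le> n i)"
  shows "(\<Prod>i\<in>C. (a i * x) powi n i) = (\<Prod>i\<in>C. a i powi n i) * x powi (\<Sum>i\<in>C. n i)"
  using assms
proof (induction C rule: finite_induct)
  case empty then show ?case by simp
next
  case (insert i C)
  have IH: "(\<Prod>i\<in>C. (a i * x) powi n i) = (\<Prod>i\<in>C. a i powi n i) * x powi (\<Sum>i\<in>C. n i)"
    using insert by auto
  have "x powi (n i + (\<Sum>i\<in>C. n i)) = x powi n i * x powi (\<Sum>i\<in>C. n i)"
    by (rule powi_add_gen) (use insert.prems in \<open>auto intro: sum_nonneg\<close>)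
  then show ?case using insert IH
    by (simp add: power_int_mult_distrib mult_ac)
qed

lemma hlin_shift_gen: "hlin h J (\<lambda>k. u k + t) i = hlin h J u i + t * hlin h J (\<lambda>_. 1) i"
  unfolding hlin_def by (simp add: algebra_simps sum.distrib sum_distrib_left)

lemma lin_tendsto: "((\<lambda>t::real. a + t * b) \<longlongrightarrow> (a::real)) (at 0)"
proof -
  have "((\<lambda>t::real. a + t * b) \<longlongrightarrow> a + 0 * b) (at 0)" by (intro tendsto_intros)
  then show ?thesis by simp
qed

lemma eventually_notin_finite:
  fixes B :: "real set"
  assumes "finite B" shows "eventually (\<lambda>t. t \<notin> B) (at x)"
  using assms islimpt_finite islimpt_iff_eventually by blast

locale redsetup =
  fixes h :: "'r \<Rightarrow> 'c \<Rightarrow> int" and R :: "'r set" and J :: "'c set"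
  assumes finR: "finite R" and finJ: "finite J"
begin

abbreviation "N \<equiv> nz_rows h R J"
abbreviation "rel \<equiv> collinear_rel h R J"
abbreviation "Q \<equiv> N // rel"

lemma N_sub: "N \<subseteq> R" by (auto simp: nz_rows_def)
lemma finN: "finite N" using finite_subset[OF N_sub finR] .

lemma rm_refl: "row_multiple h J i i"
  unfolding row_multiple_def by (rule exI[of _ 1]) simp

lemma rm_sym:
  assumes "row_multiple h J i i'" "\<not> zero_row h J i"
  shows "row_multiple h J i' i"
proof -
  obtain c where c: "\<forall>k\<in>J. real_of_int (h i k) = c * real_of_int (h i' k)"
    using assms(1) by (auto simp: row_multiple_def)
  obtain k where k: "k \<in> J" "h i k \<noteq> 0" using assms(2) by (auto simp: zero_row_def)
  have "c \<noteq> 0" using c k by force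
  then have "\<forall>k\<in>J. real_of_int (h i' k) = (1/c) * real_of_int (h i k)"
    using c by auto
  then show ?thesis unfolding row_multiple_def by (intro exI[of _ "1/c"]) auto
qed

lemma rm_trans:
  assumes "row_multiple h J i i'" "row_multiple h J i' i''"
  shows "row_multiple h J i i''"
proof -
  obtain c where c: "\<forall>k\<in>J. real_of_int (h i k) = c * real_of_int (h i' k)"
    using assms(1) by (auto simp: row_multiple_def)
  obtain d where d: "\<forall>k\<in>J. real_of_int (h i' k) = d * real_of_int (h i'' k)"
    using assms(2) by (auto simp: row_multiple_def)
  have "\<forall>k\<in>J. real_of_int (h i k) = (c*d) * real_of_int (h i'' k)" using c d by auto
  then show ?thesis by (auto simp: row_multiple_def)
qed

lemma equiv_rel: "equiv N rel"
proof (rule equivI)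
  show "rel \<subseteq> N \<times> N" unfolding collinear_rel_def by auto
  show "refl_on N rel" unfolding refl_on_def collinear_rel_def using rm_refl by auto
  show "sym rel" unfolding sym_def collinear_rel_def using rm_sym by (auto simp: nz_rows_def)
  show "trans rel" unfolding trans_def collinear_rel_def using rm_trans by blast
qed

definition rep :: "'r set \<Rightarrow> 'r" where "rep C = (SOME r. r \<in> C)"

lemma Q_ne: "C \<in> Q \<Longrightarrow> C \<noteq> {}"
  using equiv_rel in_quotient_imp_non_empty by blast

lemma rep_in: "C \<in> Q \<Longrightarrow> rep C \<in> C"
  unfolding rep_def using Q_ne by (simp add: some_in_eq)

lemma Q_sub: "C \<in> Q \<Longrightarrow> C \<subseteq> N"
  using equiv_rel in_quotient_imp_subset by blast

lemma finQ: "finite Q"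
  using finN equiv_rel by (meson finite_quotient equiv_type)

lemma finC: "C \<in> Q \<Longrightarrow> finite C"
  using Q_sub finN finite_subset by blast

lemma Q_class: "C \<in> Q \<Longrightarrow> i \<in> C \<Longrightarrow> C = rel `` {i}"
  using equiv_rel by (metis Image_singleton_iff equiv_class_eq quotientE)

lemma rep_rel: "C \<in> Q \<Longrightarrow> i \<in> C \<Longrightarrow> row_multiple h J i (rep C)"
proof -
  assume a: "C \<in> Q" "i \<in> C"
  have "C = rel `` {rep C}" using Q_class[OF a(1) rep_in[OF a(1)]] .
  then have "(rep C, i) \<in> rel" using a(2) by auto
  then show ?thesis by (auto simp: collinear_rel_def)
qed

definition coef :: "'r set \<Rightarrow> 'r \<Rightarrow> real" where
  "coef C i = (SOME c. \<forall>k\<in>J. real_of_int (h i k) = c * real_of_int (h (rep C) k))"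

lemma coef:
  assumes "C \<in> Q" "i \<in> C"
  shows "\<forall>k\<in>J. real_of_int (h i k) = coef C i * real_of_int (h (rep C) k)"
  using rep_rel[OF assms] unfolding row_multiple_def coef_def by (rule someI_ex)

lemma rep_nz: "C \<in> Q \<Longrightarrow> \<not> zero_row h J (rep C)"
  using rep_in Q_sub by (auto simp: nz_rows_def)

lemma coef_nz:
  assumes "C \<in> Q" "i \<in> C" shows "coef C i \<noteq> 0"
proof
  assume "coef C i = 0"
  then have "zero_row h J i" using coef[OF assms] by (auto simp: zero_row_def)
  then show False using assms Q_sub by (auto simp: nz_rows_def)
qed

definition cc :: "'r set \<Rightarrow> real" where "cc C = (\<Sum>i\<in>C. coef C i)"

lemma red_h_cc:
  assumes "C \<in> Q" "k \<in> J"
  shows "real_of_int (red_h h C k) = cc C * real_of_int (h (rep C) k)"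
proof -
  have "\<forall>i\<in>C. real_of_int (h i k) = coef C i * real_of_int (h (rep C) k)"
    using coef[OF assms(1)] assms(2) by blast
  then have "(\<Sum>i\<in>C. real_of_int (h i k)) = (\<Sum>i\<in>C. coef C i * real_of_int (h (rep C) k))"
    by (metis (no_types, lifting) sum.cong)
  then show ?thesis by (simp add: red_h_def cc_def sum_distrib_right)
qed

lemma hlin_coef:
  assumes "C \<in> Q" "i \<in> C"
  shows "hlin h J u i = coef C i * hlin h J u (rep C)"
  by (rule hlin_mult[OF coef[OF assms]])

lemma hlin_red_cc:
  assumes "C \<in> Q"
  shows "hlin (red_h h) J u C = cc C * hlin h J u (rep C)"
proof -
  have "(\<Sum>i\<in>C. hlin h J u i) = (\<Sum>i\<in>C. coef C i * hlin h J u (rep C))"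
    using hlin_coef[OF assms] by (metis (no_types, lifting) sum.cong)
  then show ?thesis by (simp add: hlin_red cc_def sum_distrib_right)
qed

lemma red_rows_sub: "red_rows h R J \<subseteq> Q"
  by (auto simp: red_rows_def)

lemma red_rows_iff: "C \<in> Q \<Longrightarrow> C \<in> red_rows h R J \<longleftrightarrow> cc C \<noteq> 0"
proof -
  assume C: "C \<in> Q"
  obtain k where k: "k \<in> J" "h (rep C) k \<noteq> 0" using rep_nz[OF C] by (auto simp: zero_row_def)
  have "zero_row (red_h h) J C \<longleftrightarrow> cc C = 0"
  proof
    assume "zero_row (red_h h) J C"
    then have "real_of_int (red_h h C k) = 0" using k by (auto simp: zero_row_def)
    then show "cc C = 0" using red_h_cc[OF C k(1)] k by auto
  next
    assume "cc C = 0"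
    then show "zero_row (red_h h) J C" using red_h_cc[OF C] by (auto simp: zero_row_def)
  qed
  then show ?thesis using C by (auto simp: red_rows_def)
qed

lemma finRed: "finite (red_rows h R J)"
  using finQ red_rows_sub finite_subset by blast

definition kC :: "'r set \<Rightarrow> 'c \<Rightarrow> real" where
  "kC C j = (\<Prod>i\<in>C. coef C i powi h i j) / cc C powi (\<Sum>i\<in>C. h i j)"

definition K :: "'c \<Rightarrow> real" where "K j = (\<Prod>C\<in>Q. kC C j)"

lemma class_factor:
  assumes C: "C \<in> Q" and j: "j \<in> J"
    and def: "\<forall>i\<in>C. h i j < 0 \<longrightarrow> hlin h J u i \<noteq> 0"
  shows "(\<Prod>i\<in>C. hlin h J u i powi h i j) = kC C j * hlin (red_h h) J u C powi red_h h C j"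
proof -
  let ?x = "hlin h J u (rep C)"
  have cond: "?x \<noteq> 0 \<or> (\<forall>i\<in>C. 0 \<le> h i j)"
  proof (cases "\<forall>i\<in>C. 0 \<le> h i j")
    case False
    then obtain i where "i \<in> C" "h i j < 0" by force
    then have "hlin h J u i \<noteq> 0" using def by auto
    then show ?thesis using hlin_coef[OF C \<open>i\<in>C\<close>] by auto
  qed simp
  have "(\<Prod>i\<in>C. hlin h J u i powi h i j) = (\<Prod>i\<in>C. (coef C i * ?x) powi h i j)"
    using hlin_coef[OF C] by (metis (no_types, lifting) prod.cong)
  also have "\<dots> = (\<Prod>i\<in>C. coef C i powi h i j) * ?x powi (\<Sum>i\<in>C. h i j)"
    using prod_powi_factor[OF finC[OF C], of ?x "\<lambda>i. h i j"] cond by simp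
  finally have A: "(\<Prod>i\<in>C. hlin h J u i powi h i j) = (\<Prod>i\<in>C. coef C i powi h i j) * ?x powi (\<Sum>i\<in>C. h i j)" .
  have rs: "red_h h C j = (\<Sum>i\<in>C. h i j)" by (simp add: red_h_def)
  show ?thesis
  proof (cases "cc C = 0")
    case True
    then have "real_of_int (red_h h C j) = 0" using red_h_cc[OF C j] by simp
    then have "real_of_int (\<Sum>i\<in>C. h i j) = 0" using rs by simp
    then have S0: "(\<Sum>i\<in>C. h i j) = 0" by linarith
    have k: "kC C j = (\<Prod>i\<in>C. coef C i powi h i j)" unfolding kC_def S0 by simp
    show ?thesis unfolding A k rs S0 by simp
  next
    case False
    let ?S = "\<Sum>i\<in>C. h i j" and ?P = "\<Prod>i\<in>C. coef C i powi h i j"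
    have e1: "hlin (red_h h) J u C powi red_h h C j = cc C powi ?S * ?x powi ?S"
      unfolding hlin_red_cc[OF C] rs by (rule power_int_mult_distrib)
    have nz: "cc C powi ?S \<noteq> 0" using False by simp
    have "kC C j * (cc C powi ?S * ?x powi ?S) = ?P * ?x powi ?S"
      unfolding kC_def using nz False by simp
    then have "?P * ?x powi ?S = kC C j * hlin (red_h h) J u C powi red_h h C j"
      by (subst e1) (rule sym)
    with A show ?thesis by (rule trans)
  qed
qed

lemma hmono_factor:
  assumes j: "j \<in> J" and def: "hdefined h R J u"
  shows "hmono h R J u j = K j * hmono (red_h h) (red_rows h R J) J u j"
proof -
  have "hmono h R J u j = (\<Prod>i\<in>N. hlin h J u i powi h i j)"
    unfolding hmono_def
    by (rule prod.mono_neutral_right[OF finR N_sub]) (use j in \<open>auto simp: nz_rows_def zero_row_def\<close>)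
  also have "\<dots> = (\<Prod>C\<in>Q. \<Prod>i\<in>C. hlin h J u i powi h i j)"
  proof -
    have "N = \<Union>Q" using equiv_rel by (simp add: Union_quotient)
    moreover have "\<forall>C\<in>Q. \<forall>C'\<in>Q. C \<noteq> C' \<longrightarrow> C \<inter> C' = {}"
      using equiv_rel quotient_disj by blast
    ultimately show ?thesis
      using prod.Union_disjoint[of Q] finQ finC by (simp add: pairwise_def disjnt_def)
  qed
  also have "\<dots> = (\<Prod>C\<in>Q. kC C j * hlin (red_h h) J u C powi red_h h C j)"
  proof (rule prod.cong[OF refl])
    fix C assume C: "C \<in> Q"
    show "(\<Prod>i\<in>C. hlin h J u i powi h i j) = kC C j * hlin (red_h h) J u C powi red_h h C j"
    proof (rule class_factor[OF C j], intro ballI impI)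
      fix i assume i: "i \<in> C" "h i j < 0"
      then have "i \<in> R" using Q_sub[OF C] N_sub by auto
      then show "hlin h J u i \<noteq> 0" using def j i(2) unfolding hdefined_def by auto
    qed
  qed
  also have "\<dots> = K j * (\<Prod>C\<in>Q. hlin (red_h h) J u C powi red_h h C j)"
    by (simp add: K_def prod.distrib)
  also have "(\<Prod>C\<in>Q. hlin (red_h h) J u C powi red_h h C j) = hmono (red_h h) (red_rows h R J) J u j"
    unfolding hmono_def
  proof (rule prod.mono_neutral_right[OF finQ red_rows_sub])
    show "\<forall>C\<in>Q - red_rows h R J. hlin (red_h h) J u C powi red_h h C j = 1"
      using j by (auto simp: red_rows_def zero_row_def)
  qed
  finally show ?thesis .
qed

lemma defined_red:
  assumes "hdefined h R J u" shows "hdefined (red_h h) (red_rows h R J) J u"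
  unfolding hdefined_def
proof (intro ballI impI)
  fix j C assume j: "j \<in> J" and C: "C \<in> red_rows h R J" and neg: "red_h h C j < 0"
  have CQ: "C \<in> Q" using C red_rows_sub by auto
  have "\<exists>i\<in>C. h i j < 0"
  proof (rule ccontr)
    assume "\<not> ?thesis"
    then have "0 \<le> red_h h C j" unfolding red_h_def by (auto intro: sum_nonneg simp: not_less)
    then show False using neg by simp
  qed
  then obtain i where i: "i \<in> C" "h i j < 0" by blast
  have "i \<in> R" using i Q_sub[OF CQ] N_sub by auto
  then have "hlin h J u i \<noteq> 0" using assms j i(2) unfolding hdefined_def by auto
  then have "hlin h J u (rep C) \<noteq> 0" using hlin_coef[OF CQ i(1)] by auto
  moreover have "cc C \<noteq> 0" using red_rows_iff[OF CQ] C by auto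
  ultimately show "hlin (red_h h) J u C \<noteq> 0" using hlin_red_cc[OF CQ] by simp
qed


lemma hlin_shift: "hlin h J (\<lambda>k. u k + t) i = hlin h J u i + t * hlin h J (\<lambda>_. 1) i"
  unfolding hlin_def by (simp add: algebra_simps sum.distrib sum_distrib_left)

lemma defined_of_nz:
  assumes "\<forall>i\<in>N. hlin h J u i \<noteq> 0" shows "hdefined h R J u"
  unfolding hdefined_def
proof (intro ballI impI)
  fix j i assume j: "j \<in> J" and i: "i \<in> R" and neg: "h i j < 0"
  have "\<not> zero_row h J i" unfolding zero_row_def using j neg by force
  then have "i \<in> N" using i by (simp add: nz_rows_def)
  then show "hlin h J u i \<noteq> 0" using assms by blast
qed

lemma hmono_red_nz:
  assumes "\<forall>i\<in>N. hlin h J u i \<noteq> 0"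
  shows "hmono (red_h h) (red_rows h R J) J u j \<noteq> 0"
proof -
  have "\<forall>C\<in>red_rows h R J. hlin (red_h h) J u C \<noteq> 0"
  proof
    fix C assume C: "C \<in> red_rows h R J"
    then have CQ: "C \<in> Q" using red_rows_sub by auto
    have "rep C \<in> N" using rep_in[OF CQ] Q_sub[OF CQ] by auto
    then have "hlin h J u (rep C) \<noteq> 0" using assms by blast
    moreover have "cc C \<noteq> 0" using red_rows_iff[OF CQ] C by auto
    ultimately show "hlin (red_h h) J u C \<noteq> 0" using hlin_red_cc[OF CQ] by simp
  qed
  then show ?thesis unfolding hmono_def using finRed by (simp add: prod_zero_iff)
qed

definition lamR :: "('c \<Rightarrow> real) \<Rightarrow> 'c \<Rightarrow> real" where
  "lamR lam j = (if j \<in> J then lam j * K j else 0)"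

lemma lamR_prop:
  assumes "hdefined h R J u"
  shows "hmap (red_h h) (red_rows h R J) J (lamR lam) u = hmap h R J lam u"
  unfolding hmap_def lamR_def using hmono_factor[OF _ assms] by (auto simp: fun_eq_iff)

lemma red_lam_eq:
  assumes one_nz: "\<forall>i\<in>N. hlin h J (\<lambda>_. 1) i \<noteq> 0"
  shows "red_lam h R J lam = lamR lam"
  unfolding red_lam_def
proof (rule the_equality)
  show "(\<forall>j. j \<notin> J \<longrightarrow> lamR lam j = 0) \<and>
    (\<forall>u. hdefined h R J u \<and> hdefined (red_h h) (red_rows h R J) J u \<longrightarrow>
         hmap (red_h h) (red_rows h R J) J (lamR lam) u = hmap h R J lam u)"
    using lamR_prop by (auto simp: lamR_def)
next
  fix l assume l: "(\<forall>j. j \<notin> J \<longrightarrow> l j = 0) \<and>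
    (\<forall>u. hdefined h R J u \<and> hdefined (red_h h) (red_rows h R J) J u \<longrightarrow>
         hmap (red_h h) (red_rows h R J) J l u = hmap h R J lam u)"
  let ?u = "\<lambda>_::'c. 1::real"
  have d1: "hdefined h R J ?u" using defined_of_nz[OF one_nz] .
  have d2: "hdefined (red_h h) (red_rows h R J) J ?u" using defined_red[OF d1] .
  have e: "hmap (red_h h) (red_rows h R J) J l ?u = hmap (red_h h) (red_rows h R J) J (lamR lam) ?u"
    using l d1 d2 lamR_prop[OF d1] by auto
  show "l = lamR lam"
  proof
    fix j show "l j = lamR lam j"
    proof (cases "j \<in> J")
      case True
      have "l j * hmono (red_h h) (red_rows h R J) J ?u j = lamR lam j * hmono (red_h h) (red_rows h R J) J ?u j"
        using fun_cong[OF e, of j] True by (simp add: hmap_def)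
      then show ?thesis using hmono_red_nz[OF one_nz] by simp
    qed (use l lamR_def in auto)
  qed
qed

lemma red_not_multiple:
  assumes C: "C \<in> red_rows h R J" and C': "C' \<in> red_rows h R J" and ne: "C \<noteq> C'"
  shows "\<not> row_multiple (red_h h) J C C'"
proof
  assume "row_multiple (red_h h) J C C'"
  then obtain c where c: "\<forall>k\<in>J. real_of_int (red_h h C k) = c * real_of_int (red_h h C' k)"
    by (auto simp: row_multiple_def)
  have CQ: "C \<in> Q" and CQ': "C' \<in> Q" using C C' red_rows_sub by auto
  have ccnz: "cc C \<noteq> 0" using red_rows_iff[OF CQ] C by auto
  have "\<forall>k\<in>J. real_of_int (h (rep C) k) = (c * cc C' / cc C) * real_of_int (h (rep C') k)"
  proof
    fix k assume k: "k \<in> J"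
    have "cc C * real_of_int (h (rep C) k) = c * (cc C' * real_of_int (h (rep C') k))"
      using c k red_h_cc[OF CQ k] red_h_cc[OF CQ' k] by simp
    then show "real_of_int (h (rep C) k) = (c * cc C' / cc C) * real_of_int (h (rep C') k)"
      using ccnz by (simp add: field_simps)
  qed
  then have rm: "row_multiple h J (rep C) (rep C')" unfolding row_multiple_def by blast
  have "rep C \<in> N" "rep C' \<in> N" using rep_in CQ CQ' Q_sub by auto
  then have "(rep C', rep C) \<in> rel" using rm by (auto simp: collinear_rel_def)
  then have "rep C \<in> rel `` {rep C'}" by auto
  then have "rep C \<in> C'" using Q_class[OF CQ' rep_in[OF CQ']] by simp
  moreover have "rep C \<in> C" using rep_in[OF CQ] .
  ultimately show False using quotient_disj[OF equiv_rel CQ CQ'] ne by auto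
qed

lemma red_colsum:
  assumes "j \<in> J" "(\<Sum>i\<in>R. h i j) = 0"
  shows "(\<Sum>C\<in>red_rows h R J. red_h h C j) = 0"
proof -
  have "(\<Sum>C\<in>red_rows h R J. red_h h C j) = (\<Sum>C\<in>Q. red_h h C j)"
    by (rule sum.mono_neutral_left[OF finQ red_rows_sub]) (use assms(1) in \<open>auto simp: red_rows_def zero_row_def\<close>)
  also have "\<dots> = (\<Sum>C\<in>Q. \<Sum>i\<in>C. h i j)" by (simp add: red_h_def)
  also have "\<dots> = (\<Sum>i\<in>N. h i j)"
  proof -
    have "N = \<Union>Q" using equiv_rel by (simp add: Union_quotient)
    moreover have "\<forall>C\<in>Q. \<forall>C'\<in>Q. C \<noteq> C' \<longrightarrow> C \<inter> C' = {}"
      using equiv_rel quotient_disj by blast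
    moreover have "sum (\<lambda>i. h i j) (\<Union>Q) = sum (sum (\<lambda>i. h i j)) Q"
      using sum.Union_disjoint[of Q "\<lambda>i. h i j"] finC \<open>\<forall>C\<in>Q. \<forall>C'\<in>Q. C \<noteq> C' \<longrightarrow> C \<inter> C' = {}\<close> by auto
    ultimately show ?thesis by simp
  qed
  also have "\<dots> = (\<Sum>i\<in>R. h i j)"
    by (rule sum.mono_neutral_left[OF finR N_sub]) (use assms(1) in \<open>auto simp: nz_rows_def zero_row_def\<close>)
  finally show ?thesis using assms(2) by simp
qed


theorem red_horn:
  assumes colsum: "\<forall>j\<in>J. (\<Sum>i\<in>R. h i j) = 0"
    and one_nz: "\<forall>i\<in>N. hlin h J (\<lambda>_. 1) i \<noteq> 0"
    and ident: "\<forall>u. (\<forall>i\<in>N. hlin h J u i \<noteq> 0) \<longrightarrow> (\<Sum>j\<in>J. lam j * hmono h R J u j) = 1"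
    and pos: "\<forall>u. (\<forall>j\<in>J. 0 < u j) \<longrightarrow> hdefined h R J u \<and> (\<forall>j\<in>J. 0 < hmap h R J lam u j)"
  shows "horn_pair (red_h h) (red_rows h R J) J (red_lam h R J lam)
    \<and> (\<forall>u. (\<forall>j\<in>J. 0 < u j) \<longrightarrow> hmap (red_h h) (red_rows h R J) J (red_lam h R J lam) u = hmap h R J lam u)"
proof -
  let ?R' = "red_rows h R J" and ?h' = "red_h h" and ?L = "lamR lam"
  have rl: "red_lam h R J lam = ?L" using red_lam_eq[OF one_nz] .
  have posmap: "\<forall>u. (\<forall>j\<in>J. 0 < u j) \<longrightarrow> hmap ?h' ?R' J ?L u = hmap h R J lam u"
    using pos lamR_prop by blast
  have Lnz: "\<forall>j\<in>J. ?L j \<noteq> 0"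
  proof
    fix j assume j: "j \<in> J"
    let ?u = "\<lambda>_::'c. 1::real"
    have "0 < hmap h R J lam ?u j" using pos j by auto
    then have "hmap ?h' ?R' J ?L ?u j \<noteq> 0" using posmap by auto
    then show "?L j \<noteq> 0" using j by (auto simp: hmap_def)
  qed
  have fid: "(\<Sum>j\<in>J. ?L j * hmono ?h' ?R' J u j) = 1" if du: "hdefined ?h' ?R' J u" for u
  proof -
    define B where "B = (\<lambda>i. - hlin h J u i / hlin h J (\<lambda>_. 1) i) ` N"
    define g where "g = (\<lambda>t. \<Sum>j\<in>J. ?L j * hmono ?h' ?R' J (\<lambda>k. u k + t) j)"
    have finB: "finite B" unfolding B_def using finN by simp
    have good: "g t = 1" if t: "t \<notin> B" for t
    proof -
      have nz: "\<forall>i\<in>N. hlin h J (\<lambda>k. u k + t) i \<noteq> 0"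
      proof
        fix i assume i: "i \<in> N"
        show "hlin h J (\<lambda>k. u k + t) i \<noteq> 0"
        proof
          assume "hlin h J (\<lambda>k. u k + t) i = 0"
          then have "hlin h J u i + t * hlin h J (\<lambda>_. 1) i = 0" by (simp add: hlin_shift)
          then have "t = - hlin h J u i / hlin h J (\<lambda>_. 1) i" using one_nz i by (simp add: field_simps)
          then show False using t i unfolding B_def by auto
        qed
      qed
      have dt: "hdefined h R J (\<lambda>k. u k + t)" using defined_of_nz[OF nz] .
      have "g t = (\<Sum>j\<in>J. hmap ?h' ?R' J ?L (\<lambda>k. u k + t) j)"
        unfolding g_def hmap_def by simp
      also have "\<dots> = (\<Sum>j\<in>J. hmap h R J lam (\<lambda>k. u k + t) j)"
        using lamR_prop[OF dt] by simp
      also have "\<dots> = (\<Sum>j\<in>J. lam j * hmono h R J (\<lambda>k. u k + t) j)"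
        unfolding hmap_def by simp
      also have "\<dots> = 1" using ident nz by blast
      finally show ?thesis .
    qed
    have ev: "eventually (\<lambda>t. g t = 1) (at 0)"
      using eventually_notin_finite[OF finB] by (rule eventually_mono) (use good in auto)
    have lim1: "(g \<longlongrightarrow> 1) (at 0)" using tendsto_eventually[OF ev] .
    have geq: "g = (\<lambda>t. \<Sum>j\<in>J. ?L j * (\<Prod>C\<in>?R'. (hlin ?h' J u C + t * hlin ?h' J (\<lambda>_. 1) C) powi ?h' C j))"
      unfolding g_def hmono_def by (simp add: hlin_shift_gen)
    have lim2: "(g \<longlongrightarrow> (\<Sum>j\<in>J. ?L j * (\<Prod>C\<in>?R'. (hlin ?h' J u C) powi ?h' C j))) (at 0)"
      unfolding geq
    proof (intro tendsto_sum tendsto_mult tendsto_const tendsto_prod)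
      fix j C assume j: "j \<in> J" and C: "C \<in> ?R'"
      have "hlin ?h' J u C \<noteq> 0 \<or> 0 \<le> ?h' C j"
        using du j C unfolding hdefined_def by force
      then show "((\<lambda>t. (hlin ?h' J u C + t * hlin ?h' J (\<lambda>_. 1) C) powi ?h' C j) \<longlongrightarrow> hlin ?h' J u C powi ?h' C j) (at 0)"
        by (intro tendsto_power_int' lin_tendsto) auto
    qed
    have "(\<Sum>j\<in>J. ?L j * (\<Prod>C\<in>?R'. (hlin ?h' J u C) powi ?h' C j)) = 1"
      using tendsto_unique[OF _ lim2 lim1] by simp
    then show ?thesis unfolding hmono_def .
  qed
  have friendly: "friendly ?h' ?R' J ?L"
    unfolding friendly_def using finRed finJ red_colsum colsum Lnz fid by blast
  have z: "\<forall>C\<in>?R'. \<not> zero_row ?h' J C" by (simp add: red_rows_def)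
  have m: "\<forall>C\<in>?R'. \<forall>C'\<in>?R'. C \<noteq> C' \<longrightarrow> \<not> row_multiple ?h' J C C'"
    using red_not_multiple by blast
  have p: "\<forall>u. (\<forall>j\<in>J. 0 < u j) \<longrightarrow> hdefined ?h' ?R' J u \<and> (\<forall>j\<in>J. 0 < hmap ?h' ?R' J ?L u j)"
    using pos posmap defined_red by metis
  have horn: "horn_pair ?h' ?R' J ?L"
    unfolding horn_pair_def using friendly z m p by blast
  show ?thesis using horn posmap rl by simp
qed

end

lemma ltree_induct[case_names Node]:
  assumes "\<And>cs. (\<And>l t. (l, t) \<in> set cs \<Longrightarrow> P t) \<Longrightarrow> P (Node cs)"
  shows "P t"
proof (induction t rule: ltree.induct)
  case (Node cs)
  show ?case
  proof (rule assms)
    fix l t assume "(l, t) \<in> set cs"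
    moreover have "t \<in> Basic_BNFs.snds (l, t)" by simp
    ultimately show "P t" using Node by blast
  qed
qed

lemma is_path_Nil: "is_path (Node []) p \<longleftrightarrow> p = []"
  by (auto elim: is_path.cases intro: is_path.intros)

lemma paths_Node:
  "paths (Node cs) = (if cs = [] then {[]} else (\<Union>(l, t)\<in>set cs. (#) l ` paths t))"
proof (cases "cs = []")
  case True then show ?thesis by (simp add: paths_def is_path_Nil)
next
  case False
  have "is_path (Node cs) p \<longleftrightarrow> (\<exists>(l, t)\<in>set cs. \<exists>q. p = l # q \<and> is_path t q)" for p
  proof
    assume "is_path (Node cs) p"
    then show "\<exists>(l, t)\<in>set cs. \<exists>q. p = l # q \<and> is_path t q"
      using False by (cases rule: is_path.cases) auto
  next
    assume "\<exists>(l, t)\<in>set cs. \<exists>q. p = l # q \<and> is_path t q"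
    then show "is_path (Node cs) p" by (auto intro: is_path.step)
  qed
  then show ?thesis using False by (auto simp: paths_def)
qed

lemma finite_paths: "finite (paths t)"
proof (induction t rule: ltree_induct)
  case (Node cs)
  show ?case unfolding paths_Node using Node by auto
qed

lemma paths_nonempty: "paths t \<noteq> {}"
proof (induction t rule: ltree_induct)
  case (Node cs)
  show ?case
  proof (cases cs)
    case Nil then show ?thesis by (simp add: paths_Node)
  next
    case (Cons c cs')
    obtain l t where c: "c = (l, t)" by force
    then have "paths t \<noteq> {}" using Node Cons by auto
    then show ?thesis unfolding paths_Node using Cons c by force
  qed
qed

lemma vertex_Node: "vertex (Node cs) v \<longleftrightarrow> v = Node cs \<or> (\<exists>(l, t)\<in>set cs. vertex t v)"
  by (auto elim: vertex.cases intro: vertex.intros)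

lemma finite_vertices: "finite {v. vertex t v}"
proof (induction t rule: ltree_induct)
  case (Node cs)
  have "{v. vertex (Node cs) v} = insert (Node cs) (\<Union>(l, t)\<in>set cs. {v. vertex t v})"
    by (auto simp: vertex_Node)
  then show ?case using Node by auto
qed

lemma vertex_trans: "vertex t v \<Longrightarrow> vertex v w \<Longrightarrow> vertex t w"
  by (induction rule: vertex.induct) (auto intro: vertex.intros)

lemma finite_florets: "finite (florets T)"
proof -
  have "florets T \<subseteq> (\<lambda>v. case v of Node cs \<Rightarrow> set (map fst cs)) ` {v. vertex T v}"
    unfolding florets_def
  proof (intro subsetI, elim CollectE exE conjE)
    fix x cs assume "x = set (map fst cs)" "vertex T (Node cs)"
    then show "x \<in> (\<lambda>v. case v of Node cs \<Rightarrow> set (map fst cs)) ` {v. vertex T v}"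
      by (intro image_eqI[of _ _ "Node cs"]) auto
  qed
  then show ?thesis using finite_vertices finite_subset by blast
qed

lemma finite_floret: "f \<in> florets T \<Longrightarrow> finite f"
  unfolding florets_def by auto

lemma finite_labels: "finite (labels T)"
  unfolding labels_def using finite_florets finite_floret by blast

lemma florets_child:
  assumes lt: "(l, t) \<in> set cs" shows "florets t \<subseteq> florets (Node cs)"
proof
  fix x assume "x \<in> florets t"
  then obtain ds where ds: "x = set (map fst ds)" "vertex t (Node ds)" "ds \<noteq> []"
    by (auto simp: florets_def)
  have v: "vertex (Node cs) (Node ds)" by (rule vertex.child[OF lt ds(2)])
  show "x \<in> florets (Node cs)"
    unfolding florets_def by (rule CollectI, rule exI[of _ ds]) (use ds v in auto)
qed

lemma labels_child: "(l, t) \<in> set cs \<Longrightarrow> labels t \<subseteq> labels (Node cs)"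
  unfolding labels_def by (rule Union_mono, rule florets_child)

lemma path_labels: "is_path t p \<Longrightarrow> set p \<subseteq> labels t"
proof (induction rule: is_path.induct)
  case leaf then show ?case by simp
next
  case (step l t cs p)
  have "set (map fst cs) \<in> florets (Node cs)"
    unfolding florets_def using step(1) by (auto intro: vertex.root)
  moreover have "l \<in> set (map fst cs)" using step(1) by (metis fst_conv image_eqI set_map)
  ultimately have "l \<in> labels (Node cs)" unfolding labels_def by (rule UnionI)
  moreover have "set p \<subseteq> labels (Node cs)" using step(3) labels_child[OF step(1)] by (rule order_trans)
  ultimately show ?case by simp
qed

lemma vertex_prefix: "vertex t v \<Longrightarrow> \<exists>q. \<forall>p. is_path v p \<longrightarrow> is_path t (q @ p)"
proof (induction rule: vertex.induct)
  case (root t) then show ?case by (rule exI[of _ "[]"]) simp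
next
  case (child l t' cs v)
  then obtain q where q: "\<forall>p. is_path v p \<longrightarrow> is_path t' (q @ p)" by blast
  show ?case
    by (rule exI[of _ "l # q"]) (use q child(1) in \<open>auto intro: is_path.step\<close>)
qed

lemma label_on_path:
  assumes "i \<in> labels T" shows "\<exists>p\<in>paths T. i \<in> set p"
proof -
  obtain cs where v: "vertex T (Node cs)" and i: "i \<in> set (map fst cs)"
    using assms unfolding labels_def florets_def by auto
  then obtain t' where it: "(i, t') \<in> set cs" by auto
  obtain p' where "p' \<in> paths t'" using paths_nonempty by blast
  then have "is_path (Node cs) (i # p')" using it by (auto simp: paths_def intro: is_path.step)
  moreover obtain q where "\<forall>p. is_path (Node cs) p \<longrightarrow> is_path T (q @ p)"
    using vertex_prefix[OF v] by blast
  ultimately have "q @ i # p' \<in> paths T" by (auto simp: paths_def)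
  then show ?thesis by force
qed

lemma sum_paths_one:
  fixes s :: "'l \<Rightarrow> real"
  assumes "\<forall>cs. vertex t (Node cs) \<longrightarrow> cs \<noteq> [] \<longrightarrow> distinct (map fst cs) \<and> (\<Sum>l\<in>set (map fst cs). s l) = 1"
  shows "(\<Sum>p\<in>paths t. prod_list (map s p)) = 1"
  using assms
proof (induction t rule: ltree_induct)
  case (Node cs)
  show ?case
  proof (cases "cs = []")
    case True then show ?thesis by (simp add: paths_Node)
  next
    case False
    have hyp: "distinct (map fst cs)" "(\<Sum>l\<in>set (map fst cs). s l) = 1"
      using Node.prems False by (auto intro: vertex.root)
    have sub: "(\<Sum>p\<in>paths t. prod_list (map s p)) = 1" if lt: "(l, t) \<in> set cs" for l t
      using Node.IH[OF lt] Node.prems lt by (auto intro: vertex.child)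
    have inj: "inj_on fst (set cs)" using hyp(1) by (simp add: distinct_map)
    have "(\<Sum>p\<in>paths (Node cs). prod_list (map s p))
        = (\<Sum>p\<in>(\<Union>(l, t)\<in>set cs. (#) l ` paths t). prod_list (map s p))"
      using False by (simp add: paths_Node)
    also have "\<dots> = (\<Sum>x\<in>set cs. \<Sum>p\<in>(case x of (l, t) \<Rightarrow> (#) l ` paths t). prod_list (map s p))"
    proof (rule sum.UNION_disjoint)
      show "\<forall>x\<in>set cs. \<forall>y\<in>set cs. x \<noteq> y \<longrightarrow> (case x of (l, t) \<Rightarrow> (#) l ` paths t) \<inter> (case y of (l, t) \<Rightarrow> (#) l ` paths t) = {}"
      proof (intro ballI impI)
        fix x y assume xy: "x \<in> set cs" "y \<in> set cs" "x \<noteq> y"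
        then have "fst x \<noteq> fst y" using inj by (auto simp: inj_on_def)
        then show "(case x of (l, t) \<Rightarrow> (#) l ` paths t) \<inter> (case y of (l, t) \<Rightarrow> (#) l ` paths t) = {}"
          by (cases x; cases y) auto
      qed
    qed (auto simp: finite_paths)
    also have "\<dots> = (\<Sum>x\<in>set cs. s (fst x))"
    proof (rule sum.cong[OF refl])
      fix x assume x: "x \<in> set cs"
      obtain l t where lt: "x = (l, t)" by force
      have "(\<Sum>p\<in>(#) l ` paths t. prod_list (map s p)) = (\<Sum>p\<in>paths t. prod_list (map s (l # p)))"
        by (subst sum.reindex) (auto simp: inj_on_def)
      also have "\<dots> = s l * (\<Sum>p\<in>paths t. prod_list (map s p))" by (simp add: sum_distrib_left)
      also have "\<dots> = s l" using sub x lt by simp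
      finally show "(\<Sum>p\<in>(case x of (l, t) \<Rightarrow> (#) l ` paths t). prod_list (map s p)) = s (fst x)"
        using lt by simp
    qed
    also have "\<dots> = (\<Sum>l\<in>fst ` set cs. s l)" using sum.reindex[OF inj, of s] by simp
    also have "\<dots> = 1" using hyp(2) by simp
    finally show ?thesis .
  qed
qed

lemma prod_list_count:
  fixes s :: "'a \<Rightarrow> real"
  assumes "set p \<subseteq> L" "finite L"
  shows "prod_list (map s p) = (\<Prod>i\<in>L. s i ^ count_list p i)"
  using assms
proof (induction p)
  case Nil then show ?case by simp
next
  case (Cons a p)
  have IH: "prod_list (map s p) = (\<Prod>i\<in>L. s i ^ count_list p i)" using Cons by auto
  have a: "a \<in> L" using Cons by auto
  have "(\<Prod>i\<in>L. s i ^ count_list (a # p) i) = (\<Prod>i\<in>L. (if i = a then s i else 1) * s i ^ count_list p i)"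
    by (rule prod.cong) auto
  also have "\<dots> = (\<Prod>i\<in>L. (if i = a then s i else 1)) * (\<Prod>i\<in>L. s i ^ count_list p i)"
    by (rule prod.distrib)
  also have "(\<Prod>i\<in>L. (if i = a then s i else 1)) = s a"
    using a Cons.prems(2) by (simp add: prod.If_cases Int_absorb1 Diff_eq)
  finally show ?case using IH by simp
qed

lemma ln_strict: "0 < (x::real) \<Longrightarrow> x \<noteq> 1 \<Longrightarrow> ln x < x - 1"
proof -
  assume x: "0 < x" "x \<noteq> 1"
  have s: "0 < sqrt x" "sqrt x \<noteq> 1" using x by auto
  have "ln x = 2 * ln (sqrt x)" using x by (simp add: ln_sqrt)
  also have "\<dots> \<le> 2 * (sqrt x - 1)" using ln_le_minus_one[OF s(1)] by simp
  also have "\<dots> < x - 1"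
  proof -
    have "0 < (sqrt x - 1)^2" using s by simp
    then show ?thesis using x by (simp add: power2_eq_square algebra_simps)
  qed
  finally show ?thesis .
qed

lemma gibbs:
  fixes a s :: "'a \<Rightarrow> real"
  assumes fin: "finite A" and a: "\<forall>l\<in>A. 0 < a l" and s: "\<forall>l\<in>A. 0 < s l"
    and s1: "(\<Sum>l\<in>A. s l) = 1"
  shows "(\<Sum>l\<in>A. a l * ln (s l)) \<le> (\<Sum>l\<in>A. a l * ln (a l / (\<Sum>l\<in>A. a l)))"
    and "(\<exists>l\<in>A. s l \<noteq> a l / (\<Sum>l\<in>A. a l)) \<Longrightarrow>
      (\<Sum>l\<in>A. a l * ln (s l)) < (\<Sum>l\<in>A. a l * ln (a l / (\<Sum>l\<in>A. a l)))"
proof -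
  define S where "S = (\<Sum>l\<in>A. a l)"
  have Ane: "A \<noteq> {}" using s1 by auto
  have Spos: "0 < S" unfolding S_def using fin Ane a by (simp add: sum_pos)
  define t where "t l = a l / S" for l
  have tpos: "\<forall>l\<in>A. 0 < t l" using a Spos by (simp add: t_def)
  have diff: "a l * ln (s l) - a l * ln (t l) = a l * ln (s l / t l)" if l: "l \<in> A" for l
  proof -
    have "0 < s l" "0 < t l" using s tpos l by auto
    then show ?thesis by (simp add: ln_div algebra_simps)
  qed
  have bound: "a l * ln (s l / t l) \<le> S * s l - a l" if l: "l \<in> A" for l
  proof -
    have "ln (s l / t l) \<le> s l / t l - 1" using s tpos l by (intro ln_le_minus_one) simp
    then have "a l * ln (s l / t l) \<le> a l * (s l / t l - 1)" using a l by (simp add: mult_left_mono)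
    also have "\<dots> = S * s l - a l"
    proof -
      have "a l \<noteq> 0" using a l by force
      then show ?thesis using Spos by (simp add: t_def field_simps)
    qed
    finally show ?thesis .
  qed
  have sumb: "(\<Sum>l\<in>A. S * s l - a l) = 0"
    by (simp add: sum_subtractf sum_distrib_left[symmetric] s1 S_def)
  have eqd: "(\<Sum>l\<in>A. a l * ln (s l)) - (\<Sum>l\<in>A. a l * ln (t l)) = (\<Sum>l\<in>A. a l * ln (s l / t l))"
    using diff by (simp add: sum_subtractf[symmetric])
  have "(\<Sum>l\<in>A. a l * ln (s l / t l)) \<le> (\<Sum>l\<in>A. S * s l - a l)"
    using bound by (rule sum_mono)
  then show "(\<Sum>l\<in>A. a l * ln (s l)) \<le> (\<Sum>l\<in>A. a l * ln (a l / (\<Sum>l\<in>A. a l)))"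
    using eqd sumb by (simp add: t_def S_def)
  assume "\<exists>l\<in>A. s l \<noteq> a l / (\<Sum>l\<in>A. a l)"
  then obtain l0 where l0: "l0 \<in> A" "s l0 \<noteq> t l0" by (auto simp: t_def S_def)
  have "(\<Sum>l\<in>A. a l * ln (s l / t l)) < (\<Sum>l\<in>A. S * s l - a l)"
  proof (rule sum_strict_mono_ex1[OF fin])
    show "\<forall>l\<in>A. a l * ln (s l / t l) \<le> S * s l - a l" using bound by blast
    have "s l0 / t l0 \<noteq> 1" using l0 tpos by auto
    then have "ln (s l0 / t l0) < s l0 / t l0 - 1" using s tpos l0 by (intro ln_strict) auto
    then have "a l0 * ln (s l0 / t l0) < a l0 * (s l0 / t l0 - 1)" using a l0 by simp
    also have "\<dots> = S * s l0 - a l0"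
    proof -
      have "a l0 \<noteq> 0" using a l0 by force
      then show ?thesis using Spos by (simp add: t_def field_simps)
    qed
    finally show "\<exists>l\<in>A. a l * ln (s l / t l) < S * s l - a l" using l0 by blast
  qed
  then show "(\<Sum>l\<in>A. a l * ln (s l)) < (\<Sum>l\<in>A. a l * ln (a l / (\<Sum>l\<in>A. a l)))"
    using eqd sumb by (simp add: t_def S_def)
qed

lemma powi_sum:
  fixes x :: real
  assumes "x \<noteq> 0" "finite A"
  shows "x powi (\<Sum>a\<in>A. n a) = (\<Prod>a\<in>A. x powi n a)"
  using assms(2) by (induction A rule: finite_induct) (auto simp: power_int_add assms(1))

locale staged =
  fixes T :: "'l ltree"
  assumes st: "staged_tree T"
begin

abbreviation "J \<equiv> paths T"
abbreviation "L \<equiv> labels T"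
abbreviation "F \<equiv> florets T"

lemma finJ: "finite J" by (rule finite_paths)
lemma finL: "finite L" by (rule finite_labels)
lemma finF: "finite F" by (rule finite_florets)

lemma floret_sub: "f \<in> F \<Longrightarrow> f \<subseteq> L"
  unfolding labels_def by blast

lemma floret_disj: "f \<in> F \<Longrightarrow> g \<in> F \<Longrightarrow> f \<noteq> g \<Longrightarrow> f \<inter> g = {}"
  using st unfolding staged_tree_def by blast

lemma floret_card: "f \<in> F \<Longrightarrow> 2 \<le> card f"
proof -
  assume "f \<in> F"
  then obtain cs where cs: "f = set (map fst cs)" "vertex T (Node cs)" "cs \<noteq> []"
    by (auto simp: florets_def)
  have "2 \<le> length cs" "distinct (map fst cs)" using st cs unfolding staged_tree_def by auto
  then show ?thesis using cs(1) distinct_card[of "map fst cs"] by simp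
qed

lemma labels_Union: "L = \<Union>F" by (simp add: labels_def)

lemma sum_labels: "(\<Sum>i\<in>L. g i) = (\<Sum>f\<in>F. \<Sum>l\<in>f. g l)"
  unfolding labels_Union
  using sum.Union_disjoint[of F g] finite_floret floret_disj by auto

lemma prod_labels: "(\<Prod>i\<in>L. g i) = (\<Prod>f\<in>F. \<Prod>l\<in>f. g l)"
  unfolding labels_Union
  using prod.Union_disjoint[of F g] finite_floret floret_disj by auto

definition flo :: "'l \<Rightarrow> 'l set" where "flo i = (THE f. f \<in> F \<and> i \<in> f)"

lemma flo_eq: "f \<in> F \<Longrightarrow> i \<in> f \<Longrightarrow> flo i = f"
  unfolding flo_def using floret_disj by (intro the_equality) auto

lemma flo_in: "i \<in> L \<Longrightarrow> flo i \<in> F \<and> i \<in> flo i"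
proof -
  assume "i \<in> L"
  then obtain f where "f \<in> F" "i \<in> f" unfolding labels_def by blast
  then show ?thesis using flo_eq by simp
qed

definition Uc :: "('l list \<Rightarrow> real) \<Rightarrow> 'l \<Rightarrow> real" where
  "Uc u i = (\<Sum>j\<in>J. real (mu i j) * u j)"

definition UF :: "('l list \<Rightarrow> real) \<Rightarrow> 'l set \<Rightarrow> real" where
  "UF u f = (\<Sum>l\<in>f. Uc u l)"

lemma hlin_Inl: "hlin (stH T) J u (Inl i) = Uc u i"
  by (simp add: hlin_def stH_def Uc_def)

lemma hlin_Inr: "f \<in> F \<Longrightarrow> hlin (stH T) J u (Inr f) = - UF u f"
  unfolding hlin_def stH_def UF_def Uc_def
  by (simp add: sum_distrib_right sum_negf sum.swap[of _ J])

lemma Uc_pos: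
  assumes u: "\<forall>j\<in>J. 0 < u j" and i: "i \<in> L" shows "0 < Uc u i"
proof -
  obtain p where p: "p \<in> J" "i \<in> set p" using label_on_path[OF i] by blast
  have "count_list p i \<noteq> 0" using p(2) count_list_0_iff by metis
  then have "0 < mu i p" by (simp add: mu_def)
  then have "0 < real (mu i p) * u p" using u p(1) by simp
  also have "\<dots> \<le> Uc u i" unfolding Uc_def
    by (rule member_le_sum[OF p(1)]) (use u finJ in auto)
  finally show ?thesis .
qed

lemma UF_gt:
  assumes u: "\<forall>j\<in>J. 0 < u j" and f: "f \<in> F" and i: "i \<in> f" shows "Uc u i < UF u f"
proof -
  have "card f \<ge> 2" using floret_card[OF f] .
  have "\<exists>l. l \<in> f \<and> l \<noteq> i"
  proof (rule ccontr)
    assume "\<not> (\<exists>l. l \<in> f \<and> l \<noteq> i)"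
    then have "f \<subseteq> {i}" by blast
    then have "card f \<le> card {i}" by (intro card_mono) auto
    then show False using \<open>card f \<ge> 2\<close> by simp
  qed
  then obtain l where l: "l \<in> f" "l \<noteq> i" by blast
  have fin: "finite f" using finite_floret[OF f] .
  have pos: "\<forall>k\<in>f. 0 < Uc u k" using Uc_pos[OF u] floret_sub[OF f] by blast
  have "UF u f = Uc u i + (\<Sum>k\<in>f - {i}. Uc u k)"
    unfolding UF_def using fin i by (simp add: sum.remove)
  moreover have "Uc u l \<le> (\<Sum>k\<in>f - {i}. Uc u k)"
    by (rule member_le_sum) (use l fin pos in auto)
  moreover have "0 < Uc u l" using pos l by blast
  ultimately show ?thesis by linarith
qed

lemma UF_pos: "\<forall>j\<in>J. 0 < u j \<Longrightarrow> f \<in> F \<Longrightarrow> 0 < UF u f"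
proof -
  assume u: "\<forall>j\<in>J. 0 < u j" and f: "f \<in> F"
  have "card f \<ge> 2" using floret_card[OF f] .
  then have "f \<noteq> {}" by (metis card.empty not_numeral_le_zero)
  then obtain i where "i \<in> f" by blast
  then show ?thesis using UF_gt[OF u f] Uc_pos[OF u] floret_sub[OF f] by fastforce
qed


lemma stR_disj: "Inl ` L \<inter> Inr ` F = {}" by auto

lemma finR: "finite (stR T)" unfolding stR_def using finL finF by simp

lemma sum_stR: "(\<Sum>r\<in>stR T. g r) = (\<Sum>i\<in>L. g (Inl i)) + (\<Sum>f\<in>F. g (Inr f))"
  unfolding stR_def using finL finF
  by (simp add: sum.union_disjoint[OF _ _ stR_disj] sum.reindex)

lemma prod_stR: "(\<Prod>r\<in>stR T. g r) = (\<Prod>i\<in>L. g (Inl i)) * (\<Prod>f\<in>F. g (Inr f))"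
  unfolding stR_def using finL finF
  by (simp add: prod.union_disjoint[OF _ _ stR_disj] prod.reindex)

lemma colsum: "(\<Sum>r\<in>stR T. stH T r j) = 0"
proof -
  have "(\<Sum>r\<in>stR T. stH T r j) = (\<Sum>i\<in>L. int (mu i j)) + (\<Sum>f\<in>F. - (\<Sum>l\<in>f. int (mu l j)))"
    unfolding sum_stR by (simp add: stH_def)
  also have "\<dots> = 0" unfolding sum_labels[of "\<lambda>i. int (mu i j)"] by (simp add: sum_negf)
  finally show ?thesis .
qed

lemma hlin_pos_nz:
  assumes u: "\<forall>j\<in>J. 0 < u j" and r: "r \<in> stR T" shows "hlin (stH T) J u r \<noteq> 0"
proof (cases r)
  case (Inl i)
  then have "i \<in> L" using r by (auto simp: stR_def)
  then show ?thesis using Inl hlin_Inl Uc_pos[OF u] by force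
next
  case (Inr f)
  then have "f \<in> F" using r by (auto simp: stR_def)
  then show ?thesis using Inr hlin_Inr UF_pos[OF u] by force
qed

lemma floret_row_nz: assumes f: "f \<in> F" shows "\<not> zero_row (stH T) J (Inr f)"
proof -
  have "card f \<ge> 2" using floret_card[OF f] .
  then have "f \<noteq> {}" by (metis card.empty not_numeral_le_zero)
  then obtain l where l: "l \<in> f" by blast
  then have "l \<in> L" using floret_sub[OF f] by blast
  then obtain p where p: "p \<in> J" "l \<in> set p" using label_on_path[of l T] by blast
  have "count_list p l \<noteq> 0" using p(2) count_list_0_iff by metis
  then have "0 < int (mu l p)" by (simp add: mu_def)
  also have "\<dots> \<le> (\<Sum>l\<in>f. int (mu l p))"
    by (rule member_le_sum[OF l]) (use finite_floret[OF f] in auto)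
  finally have "stH T (Inr f) p \<noteq> 0" by (simp add: stH_def)
  then show ?thesis using p(1) by (auto simp: zero_row_def)
qed

lemma powi_neg1: "(-1::real) powi n * (- x) powi n = x powi n"
proof -
  have "(-1::real) powi n * (- x) powi n = ((-1) * (- x)) powi n" by (rule power_int_mult_distrib[symmetric])
  then show ?thesis by simp
qed

lemma key_formula:
  assumes UFnz: "\<forall>f\<in>F. UF u f \<noteq> 0"
  shows "stLam T j * hmono (stH T) (stR T) J u j = (\<Prod>i\<in>L. (Uc u i / UF u (flo i)) ^ mu i j)"
proof -
  define Nf where "Nf f = (\<Sum>l\<in>f. int (mu l j))" for f
  have h1: "hmono (stH T) (stR T) J u j = (\<Prod>i\<in>L. Uc u i powi int (mu i j)) * (\<Prod>f\<in>F. (- UF u f) powi (- Nf f))"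
  proof -
    have "(\<Prod>f\<in>F. hlin (stH T) J u (Inr f) powi stH T (Inr f) j) = (\<Prod>f\<in>F. (- UF u f) powi (- Nf f))"
      by (rule prod.cong[OF refl]) (simp add: hlin_Inr stH_def Nf_def)
    then show ?thesis unfolding hmono_def prod_stR by (simp add: hlin_Inl stH_def)
  qed
  have h2: "stLam T j = (\<Prod>f\<in>F. (-1) powi (- Nf f))"
  proof -
    have "stLam T j = (-1) powi (\<Sum>f\<in>F. - Nf f)" unfolding stLam_def by (simp add: stH_def Nf_def)
    also have "\<dots> = (\<Prod>f\<in>F. (-1) powi (- Nf f))" by (rule powi_sum) (use finF in auto)
    finally show ?thesis .
  qed
  have h3: "stLam T j * (\<Prod>f\<in>F. (- UF u f) powi (- Nf f)) = (\<Prod>f\<in>F. UF u f powi (- Nf f))"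
    unfolding h2 prod.distrib[symmetric] powi_neg1 ..
  have h4: "(\<Prod>f\<in>F. UF u f powi (- Nf f)) = (\<Prod>i\<in>L. UF u (flo i) powi (- int (mu i j)))"
  proof -
    have "(\<Prod>f\<in>F. UF u f powi (- Nf f)) = (\<Prod>f\<in>F. \<Prod>l\<in>f. UF u (flo l) powi (- int (mu l j)))"
    proof (rule prod.cong[OF refl])
      fix f assume f: "f \<in> F"
      have "UF u f powi (- Nf f) = UF u f powi (\<Sum>l\<in>f. - int (mu l j))"
        by (simp add: Nf_def sum_negf)
      also have "\<dots> = (\<Prod>l\<in>f. UF u f powi (- int (mu l j)))"
        by (rule powi_sum) (use UFnz f finite_floret[OF f] in auto)
      also have "\<dots> = (\<Prod>l\<in>f. UF u (flo l) powi (- int (mu l j)))"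
        by (rule prod.cong[OF refl]) (use flo_eq[OF f] in simp)
      finally show "UF u f powi (- Nf f) = (\<Prod>l\<in>f. UF u (flo l) powi (- int (mu l j)))" .
    qed
    then show ?thesis using prod_labels[of "\<lambda>i. UF u (flo i) powi (- int (mu i j))"] by simp
  qed
  have "stLam T j * hmono (stH T) (stR T) J u j
      = (\<Prod>i\<in>L. Uc u i powi int (mu i j)) * (stLam T j * (\<Prod>f\<in>F. (- UF u f) powi (- Nf f)))"
    unfolding h1 by (simp add: mult_ac)
  also have "\<dots> = (\<Prod>i\<in>L. Uc u i powi int (mu i j)) * (\<Prod>i\<in>L. UF u (flo i) powi (- int (mu i j)))"
    unfolding h3 h4 ..
  also have "\<dots> = (\<Prod>i\<in>L. Uc u i powi int (mu i j) * UF u (flo i) powi (- int (mu i j)))"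
    by (rule prod.distrib[symmetric])
  also have "\<dots> = (\<Prod>i\<in>L. (Uc u i / UF u (flo i)) ^ mu i j)"
    by (rule prod.cong[OF refl]) (simp add: power_int_minus power_divide divide_inverse power_mult_distrib power_inverse)
  finally show ?thesis .
qed

definition modelpt :: "('l \<Rightarrow> real) \<Rightarrow> 'l list \<Rightarrow> real" where
  "modelpt s = (\<lambda>j. if j \<in> J then (\<Prod>i\<in>L. s i ^ mu i j) else 0)"

lemma staged_model_eq: "staged_model T = {modelpt s | s. (\<forall>i\<in>L. 0 < s i \<and> s i < 1) \<and> (\<forall>f\<in>F. (\<Sum>i\<in>f. s i) = 1)}"
  unfolding staged_model_def modelpt_def by blast

lemma prod_path: "p \<in> J \<Longrightarrow> (\<Prod>i\<in>L. (s::'l\<Rightarrow>real) i ^ mu i p) = prod_list (map s p)"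
  using prod_list_count[of p L s] path_labels[of T p] finL by (simp add: paths_def mu_def)

lemma model_sum:
  fixes s :: "'l \<Rightarrow> real"
  assumes "\<forall>f\<in>F. (\<Sum>l\<in>f. s l) = 1"
  shows "(\<Sum>p\<in>J. \<Prod>i\<in>L. s i ^ mu i p) = 1"
proof -
  have "(\<Sum>p\<in>J. \<Prod>i\<in>L. s i ^ mu i p) = (\<Sum>p\<in>J. prod_list (map s p))"
    by (rule sum.cong[OF refl]) (rule prod_path)
  also have "\<dots> = 1"
  proof (rule sum_paths_one, intro allI impI conjI)
    fix cs assume v: "vertex T (Node cs)" and ne: "cs \<noteq> []"
    show "distinct (map fst cs)" using st v unfolding staged_tree_def by blast
    have "set (map fst cs) \<in> F" unfolding florets_def using v ne by blast
    then show "(\<Sum>l\<in>set (map fst cs). s l) = 1" using assms by blast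
  qed
  finally show ?thesis .
qed

definition shat :: "('l list \<Rightarrow> real) \<Rightarrow> 'l \<Rightarrow> real" where
  "shat u i = Uc u i / UF u (flo i)"

lemma shat_sum:
  assumes "f \<in> F" "UF u f \<noteq> 0" shows "(\<Sum>l\<in>f. shat u l) = 1"
proof -
  have "(\<Sum>l\<in>f. shat u l) = (\<Sum>l\<in>f. Uc u l / UF u f)"
    by (rule sum.cong[OF refl]) (simp add: shat_def flo_eq[OF assms(1)])
  also have "\<dots> = UF u f / UF u f" unfolding UF_def by (rule sum_divide_distrib[symmetric])
  finally show ?thesis using assms(2) by simp
qed

lemma shat_pos:
  assumes u: "\<forall>j\<in>J. 0 < u j" and i: "i \<in> L" shows "0 < shat u i \<and> shat u i < 1"
proof -
  have f: "flo i \<in> F" "i \<in> flo i" using flo_in[OF i] by auto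
  have "0 < Uc u i" using Uc_pos[OF u i] .
  moreover have "Uc u i < UF u (flo i)" using UF_gt[OF u f] .
  ultimately show ?thesis by (simp add: shat_def)
qed

lemma hmap_orig:
  assumes UFnz: "\<forall>f\<in>F. UF u f \<noteq> 0"
  shows "hmap (stH T) (stR T) J (stLam T) u = modelpt (shat u)"
  unfolding hmap_def modelpt_def shat_def using key_formula[OF UFnz] by auto

lemma ident_orig:
  assumes nz: "\<forall>r\<in>nz_rows (stH T) (stR T) J. hlin (stH T) J u r \<noteq> 0"
  shows "(\<Sum>j\<in>J. stLam T j * hmono (stH T) (stR T) J u j) = 1"
proof -
  have UFnz: "\<forall>f\<in>F. UF u f \<noteq> 0"
  proof
    fix f assume f: "f \<in> F"
    then have "Inr f \<in> nz_rows (stH T) (stR T) J"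
      using floret_row_nz[OF f] by (simp add: nz_rows_def stR_def)
    then show "UF u f \<noteq> 0" using nz hlin_Inr[OF f] by force
  qed
  have "(\<Sum>j\<in>J. stLam T j * hmono (stH T) (stR T) J u j) = (\<Sum>j\<in>J. \<Prod>i\<in>L. shat u i ^ mu i j)"
    by (rule sum.cong[OF refl]) (simp add: key_formula[OF UFnz] shat_def)
  also have "\<dots> = 1" by (rule model_sum) (use shat_sum UFnz in blast)
  finally show ?thesis .
qed

lemma pos_orig:
  assumes u: "\<forall>j\<in>J. 0 < u j"
  shows "hdefined (stH T) (stR T) J u \<and> (\<forall>j\<in>J. 0 < hmap (stH T) (stR T) J (stLam T) u j)"
proof
  show "hdefined (stH T) (stR T) J u" unfolding hdefined_def using hlin_pos_nz[OF u] by blast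
  have UFnz: "\<forall>f\<in>F. UF u f \<noteq> 0" using UF_pos[OF u] by force
  show "\<forall>j\<in>J. 0 < hmap (stH T) (stR T) J (stLam T) u j"
  proof
    fix j assume j: "j \<in> J"
    have "0 < (\<Prod>i\<in>L. shat u i ^ mu i j)"
      by (rule prod_pos) (use shat_pos[OF u] in auto)
    then show "0 < hmap (stH T) (stR T) J (stLam T) u j"
      unfolding hmap_orig[OF UFnz] modelpt_def using j by simp
  qed
qed


lemma loglik_model:
  assumes s: "\<forall>i\<in>L. 0 < s i"
  shows "loglik J u (modelpt s) = (\<Sum>i\<in>L. Uc u i * ln (s i))"
proof -
  have "loglik J u (modelpt s) = (\<Sum>j\<in>J. u j * ln (\<Prod>i\<in>L. s i ^ mu i j))"
    unfolding loglik_def modelpt_def by simp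
  also have "\<dots> = (\<Sum>j\<in>J. u j * (\<Sum>i\<in>L. real (mu i j) * ln (s i)))"
  proof (rule sum.cong[OF refl])
    fix j
    have "ln (\<Prod>i\<in>L. s i ^ mu i j) = (\<Sum>i\<in>L. ln (s i ^ mu i j))"
      by (rule ln_prod[OF finL]) (use s in auto)
    also have "\<dots> = (\<Sum>i\<in>L. real (mu i j) * ln (s i))" by (simp add: ln_realpow)
    finally show "u j * ln (\<Prod>i\<in>L. s i ^ mu i j) = u j * (\<Sum>i\<in>L. real (mu i j) * ln (s i))" by simp
  qed
  also have "\<dots> = (\<Sum>i\<in>L. Uc u i * ln (s i))"
    unfolding Uc_def by (simp add: sum_distrib_left sum_distrib_right sum.swap[of _ J] mult_ac)
  finally show ?thesis .
qed

lemma model_pos: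
  assumes s: "\<forall>i\<in>L. 0 < s i" and j: "j \<in> J" shows "0 < modelpt s j"
  unfolding modelpt_def using j s by (simp add: prod_pos)

lemma mle:
  assumes u: "\<forall>j\<in>J. 0 < u j"
  shows "is_MLE J (staged_model T) u (modelpt (shat u))"
  unfolding is_MLE_def
proof (intro conjI ballI impI)
  have UFnz: "\<forall>f\<in>F. UF u f \<noteq> 0" using UF_pos[OF u] by force
  have sp: "\<forall>i\<in>L. 0 < shat u i \<and> shat u i < 1" using shat_pos[OF u] by blast
  have ss: "\<forall>f\<in>F. (\<Sum>i\<in>f. shat u i) = 1" using shat_sum UFnz by blast
  show "modelpt (shat u) \<in> staged_model T"
    unfolding staged_model_eq using sp ss by blast
  fix q assume q: "q \<in> staged_model T" and ne: "q \<noteq> modelpt (shat u)"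
  then obtain s where qs: "q = modelpt s" and s1: "\<forall>i\<in>L. 0 < s i \<and> s i < 1"
    and s2: "\<forall>f\<in>F. (\<Sum>i\<in>f. s i) = 1"
    unfolding staged_model_eq by blast
  have "\<exists>i\<in>L. s i \<noteq> shat u i"
  proof (rule ccontr)
    assume "\<not> (\<exists>i\<in>L. s i \<noteq> shat u i)"
    then have "\<forall>i\<in>L. s i = shat u i" by blast
    then have "modelpt s = modelpt (shat u)" unfolding modelpt_def by (auto intro!: prod.cong)
    then show False using ne qs by simp
  qed
  then obtain i0 where i0: "i0 \<in> L" "s i0 \<noteq> shat u i0" by blast
  have shat_eq: "shat u l = Uc u l / (\<Sum>l\<in>f. Uc u l)" if "f \<in> F" "l \<in> f" for f l
    using that by (simp add: shat_def flo_eq UF_def)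
  have le: "(\<Sum>l\<in>f. Uc u l * ln (s l)) \<le> (\<Sum>l\<in>f. Uc u l * ln (shat u l))" if f: "f \<in> F" for f
  proof -
    have "(\<Sum>l\<in>f. Uc u l * ln (s l)) \<le> (\<Sum>l\<in>f. Uc u l * ln (Uc u l / (\<Sum>l\<in>f. Uc u l)))"
      by (rule gibbs(1)) (use f finite_floret[OF f] floret_sub[OF f] Uc_pos[OF u] s1 s2 in auto)
    also have "\<dots> = (\<Sum>l\<in>f. Uc u l * ln (shat u l))"
      by (rule sum.cong[OF refl]) (simp add: shat_eq[OF f])
    finally show ?thesis .
  qed
  have lt: "(\<Sum>l\<in>flo i0. Uc u l * ln (s l)) < (\<Sum>l\<in>flo i0. Uc u l * ln (shat u l))"
  proof -
    have f: "flo i0 \<in> F" "i0 \<in> flo i0" using flo_in[OF i0(1)] by auto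
    have "(\<Sum>l\<in>flo i0. Uc u l * ln (s l)) < (\<Sum>l\<in>flo i0. Uc u l * ln (Uc u l / (\<Sum>l\<in>flo i0. Uc u l)))"
    proof (rule gibbs(2))
      show "\<exists>l\<in>flo i0. s l \<noteq> Uc u l / (\<Sum>l\<in>flo i0. Uc u l)"
        using f i0 shat_eq[OF f] by metis
    qed (use f finite_floret[OF f(1)] floret_sub[OF f(1)] Uc_pos[OF u] s1 s2 in auto)
    also have "\<dots> = (\<Sum>l\<in>flo i0. Uc u l * ln (shat u l))"
      by (rule sum.cong[OF refl]) (simp add: shat_eq[OF f(1)])
    finally show ?thesis .
  qed
  have s0: "\<forall>i\<in>L. 0 < s i" using s1 by blast
  have sh0: "\<forall>i\<in>L. 0 < shat u i" using sp by blast
  have "loglik J u q = (\<Sum>i\<in>L. Uc u i * ln (s i))" unfolding qs by (rule loglik_model[OF s0])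
  also have "\<dots> = (\<Sum>f\<in>F. \<Sum>l\<in>f. Uc u l * ln (s l))" by (rule sum_labels)
  also have "\<dots> < (\<Sum>f\<in>F. \<Sum>l\<in>f. Uc u l * ln (shat u l))"
    by (rule sum_strict_mono_ex1[OF finF]) (use le lt flo_in[OF i0(1)] in blast)+
  also have "\<dots> = (\<Sum>i\<in>L. Uc u i * ln (shat u i))" by (rule sum_labels[symmetric])
  also have "\<dots> = loglik J u (modelpt (shat u))" by (rule loglik_model[OF sh0, symmetric])
  finally show "loglik J u q < loglik J u (modelpt (shat u))" .
qed

lemma model_props:
  assumes "p \<in> staged_model T"
  shows "(\<forall>j\<in>J. 0 < p j) \<and> (\<Sum>j\<in>J. p j) = 1"
proof -
  obtain s where ps: "p = modelpt s" and s1: "\<forall>i\<in>L. 0 < s i \<and> s i < 1"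
    and s2: "\<forall>f\<in>F. (\<Sum>i\<in>f. s i) = 1"
    using assms unfolding staged_model_eq by blast
  have "\<forall>j\<in>J. 0 < p j" using ps model_pos s1 by blast
  moreover have "(\<Sum>j\<in>J. p j) = 1"
    unfolding ps modelpt_def using model_sum[OF s2] by simp
  ultimately show ?thesis by blast
qed

lemma image_model:
  assumes hm: "\<forall>u. (\<forall>j\<in>J. 0 < u j) \<longrightarrow> H u = modelpt (shat u)"
  shows "H ` {u. \<forall>j\<in>J. 0 < u j} = staged_model T"
proof
  show "H ` {u. \<forall>j\<in>J. 0 < u j} \<subseteq> staged_model T"
    using hm mle unfolding is_MLE_def by auto
next
  show "staged_model T \<subseteq> H ` {u. \<forall>j\<in>J. 0 < u j}"
  proof
    fix p assume p: "p \<in> staged_model T"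
    have pp: "\<forall>j\<in>J. 0 < p j" "(\<Sum>j\<in>J. p j) = 1" using model_props[OF p] by auto
    let ?ph = "modelpt (shat p)"
    have M: "is_MLE J (staged_model T) p ?ph" using mle[OF pp(1)] .
    have php: "\<forall>j\<in>J. 0 < ?ph j" "(\<Sum>j\<in>J. ?ph j) = 1"
      using model_props M unfolding is_MLE_def by auto
    have "?ph = p"
    proof (rule ccontr)
      assume ne: "?ph \<noteq> p"
      then have "loglik J p p < loglik J p ?ph" using M p unfolding is_MLE_def by auto
      moreover have "loglik J p ?ph \<le> loglik J p p"
      proof -
        have "(\<Sum>j\<in>J. p j * ln (?ph j)) \<le> (\<Sum>j\<in>J. p j * ln (p j / (\<Sum>j\<in>J. p j)))"
          by (rule gibbs(1)[OF finJ pp(1) php(1) php(2)])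
        then show ?thesis unfolding loglik_def pp(2) by simp
      qed
      ultimately show False by simp
    qed
    then have "H p = p" using hm pp(1) by simp
    then show "p \<in> H ` {u. \<forall>j\<in>J. 0 < u j}" by (intro image_eqI[of _ _ p]) (use pp(1) in auto)
  qed
qed

end

theorem corollary3p6:
  fixes T :: "'l ltree"
  assumes "staged_tree T"
  defines "J \<equiv> paths T"
  defines "Ht \<equiv> red_h (stH T)"
  defines "Rt \<equiv> red_rows (stH T) (stR T) J"
  defines "lt \<equiv> red_lam (stH T) (stR T) J (stLam T)"
  shows "horn_pair Ht Rt J lt
       \<and> (\<forall>u. (\<forall>j\<in>J. 0 < u j) \<longrightarrow> is_MLE J (staged_model T) u (hmap Ht Rt J lt u))
       \<and> hmap Ht Rt J lt ` {u. \<forall>j\<in>J. 0 < u j} = staged_model T"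
proof -
  interpret S: staged T by (rule staged.intro[OF assms(1)])
  interpret RS: redsetup "stH T" "stR T" "paths T"
    by (rule redsetup.intro[OF S.finR S.finJ])
  have one_nz: "\<forall>i\<in>nz_rows (stH T) (stR T) (paths T). hlin (stH T) (paths T) (\<lambda>_. 1) i \<noteq> 0"
    using S.hlin_pos_nz[of "\<lambda>_. 1"] by (auto simp: nz_rows_def)
  have main: "horn_pair Ht Rt J lt \<and>
     (\<forall>u. (\<forall>j\<in>J. 0 < u j) \<longrightarrow> hmap Ht Rt J lt u = hmap (stH T) (stR T) J (stLam T) u)"
    unfolding Ht_def Rt_def lt_def J_def
    by (rule RS.red_horn) (use S.colsum one_nz S.ident_orig S.pos_orig in blast)+
  have hm: "\<forall>u. (\<forall>j\<in>J. 0 < u j) \<longrightarrow> hmap Ht Rt J lt u = S.modelpt (S.shat u)"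
  proof (intro allI impI)
    fix u :: "'l list \<Rightarrow> real" assume u: "\<forall>j\<in>J. 0 < u j"
    have UFnz: "\<forall>f\<in>florets T. S.UF u f \<noteq> 0" using S.UF_pos u unfolding J_def by force
    show "hmap Ht Rt J lt u = S.modelpt (S.shat u)"
      using main u S.hmap_orig[OF UFnz] unfolding J_def by simp
  qed
  show ?thesis
  proof (intro conjI allI impI)
    show "horn_pair Ht Rt J lt" using main by blast
  next
    fix u :: "'l list \<Rightarrow> real" assume u: "\<forall>j\<in>J. 0 < u j"
    show "is_MLE J (staged_model T) u (hmap Ht Rt J lt u)"
      using hm u S.mle unfolding J_def by simp
  next
    show "hmap Ht Rt J lt ` {u. \<forall>j\<in>J. 0 < u j} = staged_model T"
      using S.image_model[of "hmap Ht Rt J lt"] hm unfolding J_def by blast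
  qed
qed

end
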